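(* Let $\beta\in[0,1]$ and let $f\in\mathcal{A}_{\beta}$ with $f(z)=z+\sum_{n=2}^{\infty}a_nz^n$. Then for every real $\mu$, $$|a_3-\mu a_2^2|\le\begin{cases}\dfrac{(8-12\mu)+(8\mu-8)\beta+2\beta^2}{(3-2\beta)(2-\beta)^2}, & \mu<0,\\[2mm] \dfrac{2}{3-2\beta}, & 0\le\mu\le\dfrac{(2-\beta)^2}{3-2\beta},\\[2mm] -\dfrac{(8-12\mu)+(8\mu-8)\beta+2\beta^2}{(3-2\beta)(2-\beta)^2}, & \mu>\dfrac{(2-\beta)^2}{3-2\beta}.\end{cases}$$ All inequalities are sharp.
   Context: $\mathbb{D}=\{z\in\mathbb{C}:|z|<1\}$. For $\beta\in[0,1]$, $\mathcal{A}_{\beta}$ is the set of analytic functions $f$ on $\mathbb{D}$ with $f(0)=0$, $f'(0)=1$ (so $f(z)=z+\sum_{n\ge2}a_nz^n$) such that $\operatorname{Re}\big(\beta f(z)/z+(1-\beta)f'(z)\big)>0$ for all $z\in\mathbb{D}$. Sharp means that for each $\mu$ in each range there is $f\in\mathcal{A}_\beta$ attaining equality (for $\mu<0$ or $\mu>(2-\beta)^2/(3-2\beta)$: $f(z)=z+\sum_{n\ge2}\frac{2}{n-\beta(n-1)}z^n$; for the middle range: $f$ with $\beta f(z)/z+(1-\beta)f'(z)=\frac{1+z^2}{1-z^2}$). *)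

theory Defs
  imports "HOL-Complex_Analysis.Complex_Analysis"
begin

definition taylor_coeff :: "(complex \<Rightarrow> complex) \<Rightarrow> nat \<Rightarrow> complex" where
  "taylor_coeff f n = (deriv ^^ n) f 0 / of_nat (fact n)"

text \<open>The quantity beta f(z)/z + (1-beta) f'(z) is required to have
positive real part for z in the unit disc; at z = 0 it equals 1 (by continuous
extension), so it suffices to impose the condition for z different from 0.\<close>
definition A_class :: "real \<Rightarrow> (complex \<Rightarrow> complex) set" where
  "A_class \<beta> = {f. f holomorphic_on ball 0 1 \<and> f 0 = 0 \<and> deriv f 0 = 1 \<and>
     (\<forall>z\<in>ball 0 1. z \<noteq> 0 \<longrightarrow>
        Re (of_real \<beta> * (f z / z) + of_real (1 - \<beta>) * deriv f z) > 0)}"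

definition fekete_bound :: "real \<Rightarrow> real \<Rightarrow> real" where
  "fekete_bound \<beta> \<mu> =
    (if \<mu> < 0 then
       ((8 - 12*\<mu>) + (8*\<mu> - 8)*\<beta> + 2*\<beta>^2) / ((3 - 2*\<beta>) * (2 - \<beta>)^2)
     else if \<mu> \<le> (2 - \<beta>)^2 / (3 - 2*\<beta>) then 2 / (3 - 2*\<beta>)
     else - (((8 - 12*\<mu>) + (8*\<mu> - 8)*\<beta> + 2*\<beta>^2) / ((3 - 2*\<beta>) * (2 - \<beta>)^2)))"

end

theory Submission
  imports Defs
begin

lemma hol_diff: "f holomorphic_on ball 0 1 \<Longrightarrow> z \<in> ball 0 1 \<Longrightarrow> f field_differentiable at z"
  using holomorphic_on_imp_differentiable_at open_ball by blast

lemma hol_deriv: "f holomorphic_on ball 0 1 \<Longrightarrow> deriv f holomorphic_on ball (0::complex) 1"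
  by (rule holomorphic_deriv) simp_all

lemma deq:
  assumes "\<And>x. x \<in> ball 0 1 \<Longrightarrow> f x = g x" "z \<in> ball (0::complex) 1"
  shows "deriv f z = deriv g z"
proof (rule deriv_cong_ev[OF _ refl])
  have "eventually (\<lambda>x. x \<in> ball 0 1) (nhds z)"
    by (rule eventually_nhds_in_open) (use assms in auto)
  then show "eventually (\<lambda>x. f x = g x) (nhds z)"
    by (rule eventually_mono) (use assms in auto)
qed

lemma SP0:
  assumes hol: "g holomorphic_on ball 0 1" and le: "\<And>z. z \<in> ball 0 1 \<Longrightarrow> cmod (g z) \<le> 1"
  shows "cmod (deriv g 0) \<le> 1 - cmod (g 0)^2"
proof (cases "cmod (g 0) = 1")
  case True
  have "g constant_on ball 0 1"
    by (rule maximum_modulus_principle[where U="ball 0 1" and \<xi>=0]) (use assms True in auto)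
  then obtain c where c: "\<forall>x\<in>ball 0 1. g x = c" by (auto simp: constant_on_def)
  then have "deriv g 0 = deriv (\<lambda>_. c) 0" by (intro deq) auto
  then show ?thesis using True by simp
next
  case False
  with le[of 0] have a1: "cmod (g 0) < 1" by simp
  have lt: "cmod (g z) < 1" if z: "z \<in> ball 0 1" for z
  proof (rule ccontr)
    assume "\<not> cmod (g z) < 1"
    with le z have gz: "cmod (g z) = 1" by force
    have "g constant_on ball 0 1"
      by (rule maximum_modulus_principle[where U="ball 0 1" and \<xi>=z]) (use assms gz z in auto)
    then obtain c where c: "\<forall>x\<in>ball 0 1. g x = c" by (auto simp: constant_on_def)
    then have "g 0 = g z" using z by auto
    with a1 gz show False by simp
  qed
  define a where "a = g 0"
  define k where "k = Moebius_function 0 a \<circ> g"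
  have a1': "cmod a < 1" using a1 a_def by simp
  have holk: "k holomorphic_on ball 0 1"
    unfolding k_def
    by (rule holomorphic_on_compose_gen[OF hol Moebius_function_holomorphic[OF a1']])
       (use lt in auto)
  have k0: "k 0 = 0" by (simp add: k_def a_def Moebius_function_eq_zero)
  have kn: "cmod (k z) < 1" if "cmod z < 1" for z
    using Moebius_function_norm_lt_1[OF a1' lt] that by (simp add: k_def)
  have dk: "cmod (deriv k 0) \<le> 1"
    using Schwarz_Lemma(2)[OF holk k0 kn, of 0] by simp
  have dg: "g field_differentiable at 0" by (rule hol_diff[OF hol]) simp
  have den: "1 - cnj a * a \<noteq> 0"
    using a1' complex_norm_square[of a] 
    by (metis (no_types, lifting) mult.commute norm_one of_real_1 of_real_eq_iff order_less_irrefl power_one right_minus_eq abs_norm_cancel power2_eq_imp_eq norm_ge_zero)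
  have "(k has_field_derivative (deriv g 0 * (1 - cnj a * g 0) - (g 0 - a) * (- (cnj a * deriv g 0))) / (1 - cnj a * g 0)^2) (at 0)"
    unfolding k_def comp_def Moebius_function_simple
    using field_differentiable_derivI[OF dg] den unfolding a_def
    by (auto intro!: derivative_eq_intros simp: power2_eq_square)
  then have "deriv k 0 = deriv g 0 / (1 - cnj a * a)"
    using den by (auto dest!: DERIV_imp_deriv simp: a_def power2_eq_square)
  also have "1 - cnj a * a = of_real (1 - cmod a ^ 2)"
    using complex_norm_square[of a] by (simp add: mult.commute)
  finally have "cmod (deriv k 0) = cmod (deriv g 0) / cmod (complex_of_real (1 - cmod a ^2))"
    by (simp only: norm_divide)
  moreover have pos: "1 - cmod a ^2 > 0" using a1' by (simp add: power_less_one_iff)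
  ultimately have "cmod (deriv k 0) = cmod (deriv g 0) / (1 - cmod a ^2)"
    by (simp only: norm_of_real abs_of_pos)
  with pos show ?thesis using dk by (simp add: a_def divide_le_eq_1 split: if_splits)
qed

lemma hd: "f holomorphic_on ball 0 1 \<Longrightarrow> z \<in> ball 0 1 \<Longrightarrow> (f has_field_derivative deriv f z) (at z)"
  by (rule field_differentiable_derivI[OF hol_diff])

lemma norm_m1_lt: "Re w > 0 \<Longrightarrow> cmod (w - 1) < cmod (w + 1)"
proof -
  assume r: "Re w > 0"
  have "(cmod (w - 1))^2 < (cmod (w + 1))^2"
    using r unfolding cmod_power2 by (simp add: power2_eq_square algebra_simps)
  then show ?thesis by (rule power_less_imp_less_base) simp
qed

lemma cara:
  assumes hol: "p holomorphic_on ball 0 1" and p0: "p 0 = 1"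
    and re: "\<And>z. z \<in> ball 0 1 \<Longrightarrow> Re (p z) > 0"
  shows "cmod (deriv p 0) \<le> 2 \<and>
         cmod (deriv (deriv p) 0 / 2 - (deriv p 0)^2/2) \<le> 2 - cmod (deriv p 0)^2/2"
proof -
  have ne: "p z + 1 \<noteq> 0" if "z \<in> ball 0 1" for z
    using re[OF that] by (metis add_pos_pos plus_complex.sel(1) zero_complex.sel(1) less_irrefl one_complex.sel(1) zero_less_one)
  define \<omega> where "\<omega> z = (p z - 1) / (p z + 1)" for z
  have hol\<omega>: "\<omega> holomorphic_on ball 0 1"
    unfolding \<omega>_def by (intro holomorphic_intros hol ne)
  have \<omega>0: "\<omega> 0 = 0" by (simp add: \<omega>_def p0)
  have \<omega>lt: "cmod (\<omega> z) < 1" if "cmod z < 1" for z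
  proof -
    have "z \<in> ball 0 1" using that by simp
    then have "cmod (p z - 1) < cmod (p z + 1)" by (intro norm_m1_lt re)
    then show ?thesis by (simp add: \<omega>_def norm_divide divide_less_eq_1)
  qed
  obtain h where holh: "h holomorphic_on ball 0 1" and \<omega>h: "\<And>z. cmod z < 1 \<Longrightarrow> \<omega> z = z * h z"
      and d\<omega>0: "deriv \<omega> 0 = h 0"
    using Schwarz3[OF hol\<omega> \<omega>0] by blast
  have hle: "cmod (h z) \<le> 1" if "z \<in> ball 0 1" for z
  proof (cases "z = 0")
    case True
    then show ?thesis using Schwarz_Lemma(2)[OF hol\<omega> \<omega>0 \<omega>lt, of 0] d\<omega>0 by simp
  next
    case False
    have "cmod (\<omega> z) \<le> cmod z" using Schwarz_Lemma(1)[OF hol\<omega> \<omega>0 \<omega>lt, of z] that by simp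
    then have "cmod z * cmod (h z) \<le> cmod z * 1" using \<omega>h[of z] that by (simp add: norm_mult)
    then show ?thesis using False by (simp add: mult_le_cancel_left)
  qed
  have sp: "cmod (deriv h 0) \<le> 1 - cmod (h 0)^2" by (rule SP0[OF holh hle])
  have holdh: "deriv h holomorphic_on ball 0 1" by (rule hol_deriv[OF holh])
  have holdp: "deriv p holomorphic_on ball 0 1" by (rule hol_deriv[OF hol])
  have hold\<omega>: "deriv \<omega> holomorphic_on ball 0 1" by (rule hol_deriv[OF hol\<omega>])
  have D0: "(0::complex) \<in> ball 0 1" by simp
  have d\<omega>: "deriv \<omega> z = z * deriv h z + h z" if z: "z \<in> ball 0 1" for z
  proof -
    have "deriv \<omega> z = deriv (\<lambda>w. w * h w) z" by (rule deq) (use \<omega>h z in auto)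
    also have "... = z * deriv h z + h z"
      by (rule DERIV_imp_deriv) (auto intro!: derivative_eq_intros hd[OF holh z])
    finally show ?thesis .
  qed
  have dd\<omega>0: "deriv (deriv \<omega>) 0 = 2 * deriv h 0"
  proof -
    have "deriv (deriv \<omega>) 0 = deriv (\<lambda>w. w * deriv h w + h w) 0" by (rule deq) (use d\<omega> in auto)
    also have "... = 2 * deriv h 0"
      by (rule DERIV_imp_deriv) (auto intro!: derivative_eq_intros hd[OF holh D0] hd[OF holdh D0])
    finally show ?thesis .
  qed
  have dp: "deriv p z = \<omega> z * deriv p z + deriv \<omega> z * (p z + 1)" if z: "z \<in> ball 0 1" for z
  proof -
    have "deriv p z = deriv (\<lambda>w. \<omega> w * (p w + 1) + 1) z"
      by (rule deq) (use z ne in \<open>auto simp: \<omega>_def\<close>)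
    also have "... = \<omega> z * deriv p z + deriv \<omega> z * (p z + 1)"
      by (rule DERIV_imp_deriv) (auto intro!: derivative_eq_intros hd[OF hol z] hd[OF hol\<omega> z])
    finally show ?thesis .
  qed
  have ddp0: "deriv (deriv p) 0 = 2 * deriv \<omega> 0 * deriv p 0 + deriv (deriv \<omega>) 0 * 2"
  proof -
    have "deriv (deriv p) 0 = deriv (\<lambda>w. \<omega> w * deriv p w + deriv \<omega> w * (p w + 1)) 0"
      by (rule deq) (use dp in auto)
    also have "... = 2 * deriv \<omega> 0 * deriv p 0 + deriv (deriv \<omega>) 0 * 2"
      by (rule DERIV_imp_deriv)
         (auto intro!: derivative_eq_intros hd[OF hol D0] hd[OF hol\<omega> D0] hd[OF holdp D0] hd[OF hold\<omega> D0]
               simp: \<omega>0 p0)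
    finally show ?thesis .
  qed
  have c1: "deriv p 0 = 2 * h 0" using dp[OF D0] by (simp add: \<omega>0 p0 d\<omega>0)
  have c2: "deriv (deriv p) 0 / 2 - (deriv p 0)^2/2 = 2 * deriv h 0"
    using ddp0 by (simp add: c1 d\<omega>0 dd\<omega>0 power2_eq_square algebra_simps)
  have "cmod (h 0) \<le> 1" using hle[OF D0] .
  then show ?thesis using sp unfolding c2 unfolding c1 by (simp add: norm_mult power_mult_distrib)
qed


lemma tc2: "taylor_coeff f 2 = deriv (deriv f) 0 / 2"
  by (simp add: taylor_coeff_def numeral_2_eq_2)
lemma tc3: "taylor_coeff f 3 = deriv (deriv (deriv f)) 0 / 6"
  by (simp add: taylor_coeff_def numeral_3_eq_3 fact_numeral)

lemma classA_coeffs: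
  assumes "f \<in> A_class \<beta>"
  shows "\<exists>p. p holomorphic_on ball 0 1 \<and> p 0 = 1 \<and> (\<forall>z\<in>ball 0 1. Re (p z) > 0)
     \<and> deriv p 0 = of_real (2-\<beta>) * taylor_coeff f 2
     \<and> deriv (deriv p) 0 / 2 = of_real (3-2*\<beta>) * taylor_coeff f 3"
proof -
  have hol: "f holomorphic_on ball 0 1" and f0: "f 0 = 0" and d0: "deriv f 0 = 1"
    and re: "\<And>z. z \<in> ball 0 1 \<Longrightarrow> z \<noteq> 0 \<Longrightarrow>
        Re (of_real \<beta> * (f z / z) + of_real (1 - \<beta>) * deriv f z) > 0"
    using assms by (auto simp: A_class_def)
  obtain F where holF: "F holomorphic_on ball 0 1" and fF: "\<And>z. cmod z < 1 \<Longrightarrow> f z = z * F z"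
      and F0: "deriv f 0 = F 0"
    using Schwarz3[OF hol f0] by blast
  define p where "p z = of_real \<beta> * F z + of_real (1 - \<beta>) * deriv f z" for z
  have holdf: "deriv f holomorphic_on ball 0 1" by (rule hol_deriv[OF hol])
  have holddf: "deriv (deriv f) holomorphic_on ball 0 1" by (rule hol_deriv[OF holdf])
  have holdF: "deriv F holomorphic_on ball 0 1" by (rule hol_deriv[OF holF])
  have holddF: "deriv (deriv F) holomorphic_on ball 0 1" by (rule hol_deriv[OF holdF])
  have D0: "(0::complex) \<in> ball 0 1" by simp
  have holp: "p holomorphic_on ball 0 1"
    unfolding p_def by (intro holomorphic_intros holF holdf)
  have p0: "p 0 = 1" using F0 d0 by (simp add: p_def algebra_simps flip: of_real_add)
  have rep: "Re (p z) > 0" if z: "z \<in> ball 0 1" for z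
  proof (cases "z = 0")
    case True then show ?thesis using p0 by simp
  next
    case False
    then have "F z = f z / z" using fF[of z] z by simp
    then show ?thesis using re[OF z False] by (simp add: p_def)
  qed
  have df: "deriv f z = z * deriv F z + F z" if z: "z \<in> ball 0 1" for z
  proof -
    have "deriv f z = deriv (\<lambda>w. w * F w) z" by (rule deq) (use fF z in auto)
    also have "... = z * deriv F z + F z"
      by (rule DERIV_imp_deriv) (auto intro!: derivative_eq_intros hd[OF holF z])
    finally show ?thesis .
  qed
  have ddf: "deriv (deriv f) z = z * deriv (deriv F) z + 2 * deriv F z" if z: "z \<in> ball 0 1" for z
  proof -
    have "deriv (deriv f) z = deriv (\<lambda>w. w * deriv F w + F w) z" by (rule deq) (use df z in auto)
    also have "... = z * deriv (deriv F) z + 2 * deriv F z"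
      by (rule DERIV_imp_deriv) (auto intro!: derivative_eq_intros hd[OF holF z] hd[OF holdF z])
    finally show ?thesis .
  qed
  have dddf: "deriv (deriv (deriv f)) 0 = 3 * deriv (deriv F) 0"
  proof -
    have "deriv (deriv (deriv f)) 0 = deriv (\<lambda>w. w * deriv (deriv F) w + 2 * deriv F w) 0"
      by (rule deq) (use ddf in auto)
    also have "... = 3 * deriv (deriv F) 0"
      by (rule DERIV_imp_deriv) (auto intro!: derivative_eq_intros hd[OF holdF D0] hd[OF holddF D0])
    finally show ?thesis .
  qed
  have dp: "deriv p z = of_real \<beta> * deriv F z + of_real (1 - \<beta>) * deriv (deriv f) z"
    if z: "z \<in> ball 0 1" for z
    unfolding p_def
    by (rule DERIV_imp_deriv) (auto intro!: derivative_eq_intros hd[OF holF z] hd[OF holdf z])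
  have ddp: "deriv (deriv p) 0 = of_real \<beta> * deriv (deriv F) 0 + of_real (1 - \<beta>) * deriv (deriv (deriv f)) 0"
  proof -
    have "deriv (deriv p) 0 = deriv (\<lambda>z. of_real \<beta> * deriv F z + of_real (1 - \<beta>) * deriv (deriv f) z) 0"
      by (rule deq) (use dp in auto)
    also have "... = of_real \<beta> * deriv (deriv F) 0 + of_real (1 - \<beta>) * deriv (deriv (deriv f)) 0"
      by (rule DERIV_imp_deriv) (auto intro!: derivative_eq_intros hd[OF holdF D0] hd[OF holddf D0])
    finally show ?thesis .
  qed
  have c1: "deriv p 0 = of_real (2-\<beta>) * taylor_coeff f 2"
    unfolding tc2 dp[OF D0] ddf[OF D0] by (simp add: algebra_simps)
  have c2: "deriv (deriv p) 0 / 2 = of_real (3-2*\<beta>) * taylor_coeff f 3"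
    unfolding tc3 ddp dddf by (simp add: field_simps)
  show ?thesis using holp p0 rep c1 c2 by blast
qed


lemma fb_eq:
  fixes \<beta> \<mu> :: real
  assumes "0 \<le> \<beta>" "\<beta> \<le> 1"
  defines "s \<equiv> 3 - 2*\<beta>" and "t \<equiv> 2 - \<beta>"
  defines "\<nu> \<equiv> \<mu> * s / t^2"
  shows "fekete_bound \<beta> \<mu> =
     (if \<mu> < 0 then 2 - 4*\<nu> else if \<mu> \<le> t^2/s then 2 else 4*\<nu> - 2) / s"
proof -
  have s: "s > 0" and t: "t > 0" using assms by auto
  have hn: "(8 - 12*\<mu>) + (8*\<mu> - 8)*\<beta> + 2*\<beta>^2 = 2*t^2 - 4*\<mu> * s"
    unfolding s_def t_def by (simp add: power2_eq_square algebra_simps)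
  have d: "(3 - 2*\<beta>) * (2 - \<beta>)^2 = s * t^2" unfolding s_def t_def by simp
  have e: "((8 - 12*\<mu>) + (8*\<mu> - 8)*\<beta> + 2*\<beta>^2) / ((3 - 2*\<beta>) * (2 - \<beta>)^2) = (2 - 4*\<nu>)/s"
    unfolding hn d \<nu>_def using s t by (simp add: field_simps)
  show ?thesis unfolding fekete_bound_def e unfolding s_def[symmetric] t_def[symmetric]
    by (auto simp: minus_divide_left)
qed

lemma nu_bound:
  fixes \<nu> X Y :: real
  assumes X: "0 \<le> X" "X \<le> 4" and Y: "Y \<le> 2 - X/2"
  shows "\<nu> < 0 \<Longrightarrow> Y + \<bar>\<nu> - 1/2\<bar> * X \<le> 2 - 4*\<nu>"
    and "0 \<le> \<nu> \<Longrightarrow> \<nu> \<le> 1 \<Longrightarrow> Y + \<bar>\<nu> - 1/2\<bar> * X \<le> 2"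
    and "1 < \<nu> \<Longrightarrow> Y + \<bar>\<nu> - 1/2\<bar> * X \<le> 4*\<nu> - 2"
proof -
  assume n: "\<nu> < 0"
  have h: "\<nu> * 4 \<le> \<nu> * X" using n X by (intro mult_left_mono_neg) auto
  have "Y + \<bar>\<nu> - 1/2\<bar> * X = Y + X/2 - \<nu> * X" using n by (simp add: abs_if algebra_simps)
  then show "Y + \<bar>\<nu> - 1/2\<bar> * X \<le> 2 - 4*\<nu>" using h Y by linarith
next
  assume n: "0 \<le> \<nu>" "\<nu> \<le> 1"
  have "\<bar>\<nu> - 1/2\<bar> \<le> 1/2" using n by (auto simp: abs_if)
  then have "\<bar>\<nu> - 1/2\<bar> * X \<le> (1/2) * X" using X by (intro mult_right_mono) auto
  then show "Y + \<bar>\<nu> - 1/2\<bar> * X \<le> 2" using Y by simp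
next
  assume n: "1 < \<nu>"
  have h: "(\<nu> - 1) * X \<le> (\<nu> - 1) * 4" using n X by (intro mult_left_mono) auto
  have "Y + \<bar>\<nu> - 1/2\<bar> * X = Y + X/2 + (\<nu> - 1) * X" using n by (simp add: abs_if algebra_simps)
  then show "Y + \<bar>\<nu> - 1/2\<bar> * X \<le> 4*\<nu> - 2" using h Y by (simp add: algebra_simps)
qed

lemma upper:
  fixes \<beta> \<mu> :: real
  assumes b: "0 \<le> \<beta>" "\<beta> \<le> 1" and f: "f \<in> A_class \<beta>"
  shows "cmod (taylor_coeff f 3 - of_real \<mu> * (taylor_coeff f 2)^2) \<le> fekete_bound \<beta> \<mu>"
proof -
  define s where "s = 3 - 2*\<beta>"
  define t where "t = 2 - \<beta>"
  define \<nu> where "\<nu> = \<mu> * s / t^2"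
  have s: "s > 0" and t: "t > 0" using b by (auto simp: s_def t_def)
  obtain p where holp: "p holomorphic_on ball 0 1" and p0: "p 0 = 1" and re: "\<forall>z\<in>ball 0 1. Re (p z) > 0"
     and c1: "deriv p 0 = of_real t * taylor_coeff f 2"
     and c2: "deriv (deriv p) 0 / 2 = of_real s * taylor_coeff f 3"
    using classA_coeffs[OF f] unfolding s_def t_def by blast
  define C1 where "C1 = deriv p 0"
  define C2 where "C2 = deriv (deriv p) 0 / 2"
  have cb: "cmod C1 \<le> 2" "cmod (C2 - C1^2/2) \<le> 2 - cmod C1 ^2/2"
    using cara[OF holp p0] re unfolding C1_def C2_def by auto
  have id: "taylor_coeff f 3 - of_real \<mu> * (taylor_coeff f 2)^2 = (C2 - of_real \<nu> * C1^2) / of_real s"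
    using s t unfolding C1_def C2_def c1 c2 \<nu>_def
    by (simp add: field_simps power2_eq_square)
  have tri: "cmod (C2 - of_real \<nu> * C1^2) \<le> cmod (C2 - C1^2/2) + \<bar>\<nu> - 1/2\<bar> * (cmod C1)^2"
  proof -
    have "C2 - of_real \<nu> * C1^2 = (C2 - C1^2/2) - of_real (\<nu> - 1/2) * C1^2"
      by (simp add: algebra_simps)
    also have "cmod ... \<le> cmod (C2 - C1^2/2) + cmod (of_real (\<nu> - 1/2) * C1^2)"
      by (rule norm_triangle_ineq4)
    finally show ?thesis by (simp only: norm_mult norm_power norm_of_real)
  qed
  have X: "0 \<le> (cmod C1)^2" "(cmod C1)^2 \<le> 4"
    using cb(1) power_mono[OF cb(1), of 2] by auto
  note nb = nu_bound[OF X cb(2)]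
  have fb: "fekete_bound \<beta> \<mu> =
     (if \<mu> < 0 then 2 - 4*\<nu> else if \<mu> \<le> t^2/s then 2 else 4*\<nu> - 2) / s"
    unfolding \<nu>_def s_def t_def by (rule fb_eq[OF b])
  have "cmod (C2 - of_real \<nu> * C1^2) \<le> (if \<mu> < 0 then 2 - 4*\<nu> else if \<mu> \<le> t^2/s then 2 else 4*\<nu> - 2)"
  proof (cases "\<mu> < 0")
    case True
    then have "\<nu> < 0" using s t by (simp add: \<nu>_def divide_neg_pos mult_neg_pos)
    then show ?thesis using order_trans[OF tri nb(1)] True by simp
  next
    case F: False
    show ?thesis
    proof (cases "\<mu> \<le> t^2/s")
      case True
      then have "0 \<le> \<nu>" "\<nu> \<le> 1" using s t F by (auto simp: \<nu>_def field_simps)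
      then show ?thesis using order_trans[OF tri nb(2)] True F by simp
    next
      case False
      then have "1 < \<nu>" using s t F by (auto simp: \<nu>_def field_simps)
      then show ?thesis using order_trans[OF tri nb(3)] False F by simp
    qed
  qed
  then show ?thesis unfolding id fb using s by (simp add: norm_divide divide_right_mono)
qed


definition bcoef :: "complex \<Rightarrow> nat \<Rightarrow> complex" where
  "bcoef \<epsilon> m = 1 + \<epsilon>^m - (if m = 0 then 1 else 0)"

definition acoef :: "real \<Rightarrow> complex \<Rightarrow> nat \<Rightarrow> complex" where
  "acoef \<beta> \<epsilon> n = (if n = 0 then 0 else bcoef \<epsilon> (n-1) / of_real (real n - real (n-1) * \<beta>))"

definition fext :: "real \<Rightarrow> complex \<Rightarrow> complex \<Rightarrow> complex" where
  "fext \<beta> \<epsilon> z = (\<Sum>n. acoef \<beta> \<epsilon> n * z^n)"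

lemma re_geom: "cmod w < 1 \<Longrightarrow> Re (1 / (1 - w)) > 1/2"
proof -
  assume w: "cmod w < 1"
  have x: "Re w < 1" using w abs_Re_le_cmod[of w] by linarith
  have n: "(Re w)^2 + (Im w)^2 < 1" using w unfolding cmod_power2[symmetric]
    by (simp add: power_less_one_iff)
  have pos: "(1 - Re w)^2 + (Im w)^2 > 0" using x by (simp add: add_pos_nonneg)
  have "Re (1 / (1 - w)) = (1 - Re w) / ((1 - Re w)^2 + (Im w)^2)"
    by (simp add: Re_divide)
  also have "... > 1/2" using pos n x
    by (simp add: field_simps power2_eq_square)
  finally show ?thesis .
qed

lemma denom_ge1:
  assumes "0 \<le> \<beta>" "\<beta> \<le> 1" "n \<ge> 1"
  shows "real n - real (n-1) * \<beta> \<ge> 1"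
proof -
  have "real n - real (n-1) * \<beta> = 1 + real (n-1) * (1 - \<beta>)" using assms by (simp add: of_nat_diff algebra_simps)
  moreover have "real (n-1) * (1 - \<beta>) \<ge> 0" using assms by simp
  ultimately show ?thesis by linarith
qed

lemma div_ge1: "(x::real) \<ge> 0 \<Longrightarrow> d \<ge> 1 \<Longrightarrow> x / d \<le> x"
  using mult_left_mono[of 1 d x] by (simp add: divide_le_eq)

lemma acoef_bound:
  assumes b: "0 \<le> \<beta>" "\<beta> \<le> 1" and e: "cmod \<epsilon> = 1"
  shows "cmod (acoef \<beta> \<epsilon> n) \<le> 2"
proof (cases "n = 0")
  case True then show ?thesis by (simp add: acoef_def)
next
  case False
  have bb: "cmod (bcoef \<epsilon> (n-1)) \<le> 2"
  proof (cases "n - 1 = 0")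
    case True then show ?thesis by (simp add: bcoef_def)
  next
    case False
    have "cmod (1 + \<epsilon>^(n-1)) \<le> cmod (1::complex) + cmod (\<epsilon>^(n-1))" by (rule norm_triangle_ineq)
    then show ?thesis using False e by (simp add: bcoef_def norm_power)
  qed
  have d: "real n - real (n-1) * \<beta> \<ge> 1" using denom_ge1[OF b] False by simp
  have "cmod (acoef \<beta> \<epsilon> n) = cmod (bcoef \<epsilon> (n-1)) / (real n - real (n-1) * \<beta>)"
  proof -
    have d0: "0 < real n - real (n-1) * \<beta>" using d by linarith
    show ?thesis using False d0 by (simp only: acoef_def if_not_P[OF False] if_False norm_divide norm_of_real abs_of_pos)
  qed
  also have "... \<le> cmod (bcoef \<epsilon> (n-1))" by (rule div_ge1[OF norm_ge_zero d])
  finally show ?thesis using bb by linarith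
qed

lemma fext_props:
  assumes b: "0 \<le> \<beta>" "\<beta> \<le> 1" and e: "cmod \<epsilon> = 1"
  shows "fext \<beta> \<epsilon> \<in> A_class \<beta> \<and> taylor_coeff (fext \<beta> \<epsilon>) 2 = acoef \<beta> \<epsilon> 2
         \<and> taylor_coeff (fext \<beta> \<epsilon>) 3 = acoef \<beta> \<epsilon> 3"
proof -
  define A0 where "A0 = acoef \<beta> \<epsilon>"
  define A1 where "A1 = diffs A0"
  define A2 where "A2 = diffs A1"
  define A3 where "A3 = diffs A2"
  define F where "F = fext \<beta> \<epsilon>"
  define g1 where "g1 z = (\<Sum>n. A1 n * z^n)" for z
  define g2 where "g2 z = (\<Sum>n. A2 n * z^n)" for z
  define g3 where "g3 z = (\<Sum>n. A3 n * z^n)" for z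
  have Fe: "F = (\<lambda>z. \<Sum>n. A0 n * z^n)" by (rule ext) (simp add: F_def fext_def A0_def)
  have S0: "summable (\<lambda>n. A0 n * z^n)" if z: "cmod z < 1" for z
  proof (rule summable_comparison_test'[of "\<lambda>n. 2 * cmod z ^ n" 0])
    show "summable (\<lambda>n. 2 * cmod z ^ n)"
      by (rule summable_mult) (rule summable_geometric, use z in simp)
    show "cmod (A0 n * z^n) \<le> 2 * cmod z ^ n" for n
      unfolding norm_mult norm_power A0_def
      by (rule mult_right_mono[OF acoef_bound[OF b e]]) simp
  qed
  have S1: "summable (\<lambda>n. A1 n * z^n)" if z: "cmod z < 1" for z
    unfolding A1_def by (rule termdiff_converges[OF z S0])
  have S2: "summable (\<lambda>n. A2 n * z^n)" if z: "cmod z < 1" for z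
    unfolding A2_def by (rule termdiff_converges[OF z S1])
  have D0: "(F has_field_derivative g1 z) (at z)" if z: "cmod z < 1" for z
    unfolding Fe g1_def A1_def by (rule termdiffs_strong'[OF S0 z])
  have D1: "(g1 has_field_derivative g2 z) (at z)" if z: "cmod z < 1" for z
    unfolding g1_def[abs_def] g2_def A2_def by (rule termdiffs_strong'[OF S1 z])
  have D2: "(g2 has_field_derivative g3 z) (at z)" if z: "cmod z < 1" for z
    unfolding g2_def[abs_def] g3_def A3_def by (rule termdiffs_strong'[OF S2 z])
  have holF: "F holomorphic_on ball 0 1"
  proof (subst holomorphic_on_open, simp, intro ballI)
    fix x :: complex assume "x \<in> ball 0 1"
    then have "cmod x < 1" by simp
    then show "\<exists>f'. (F has_field_derivative f') (at x)" using D0 by blast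
  qed
  have dF: "deriv F z = g1 z" if "z \<in> ball 0 1" for z
    using D0[of z] that by (simp add: DERIV_imp_deriv)
  have ddF: "deriv (deriv F) z = g2 z" if z: "z \<in> ball 0 1" for z
  proof -
    have "deriv (deriv F) z = deriv g1 z" by (rule deq) (use dF z in auto)
    then show ?thesis using D1[of z] z by (simp add: DERIV_imp_deriv)
  qed
  have dddF: "deriv (deriv (deriv F)) 0 = g3 0"
  proof -
    have "deriv (deriv (deriv F)) 0 = deriv g2 0" by (rule deq) (use ddF in auto)
    then show ?thesis using D2[of 0] by (simp add: DERIV_imp_deriv)
  qed
  have A00: "A0 0 = 0" and A01: "A0 1 = 1" by (simp_all add: A0_def acoef_def bcoef_def)
  have g10: "g1 0 = A0 1" by (simp add: g1_def A1_def diffs_def)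
  have g20: "g2 0 = 2 * A0 2" by (simp add: g2_def A2_def A1_def diffs_def numeral_2_eq_2)
  have g30: "g3 0 = 6 * A0 3" by (simp add: g3_def A3_def A2_def A1_def diffs_def numeral_2_eq_2 numeral_3_eq_3)
  have F0: "F 0 = 0" by (simp add: Fe A00)
  have dF0: "deriv F 0 = 1" using dF[of 0] g10 A01 by simp
  have re: "Re (of_real \<beta> * (F z / z) + of_real (1 - \<beta>) * deriv F z) > 0"
    if z: "z \<in> ball 0 1" "z \<noteq> 0" for z
  proof -
    have zn: "cmod z < 1" using z by simp
    have sm: "summable (\<lambda>n. A0 (Suc n) * z^n)"
      using S0[OF zn] by (simp add: summable_powser_split_head)
    have "suminf (\<lambda>n. A0 (Suc n) * z ^ n) * z = F z"
      using powser_split_head(2)[OF S0[OF zn]] by (simp add: Fe A00)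
    then have "suminf (\<lambda>n. A0 (Suc n) * z ^ n) = F z / z" using z by (simp add: field_simps)
    then have s1: "(\<lambda>n. A0 (Suc n) * z^n) sums (F z / z)" using summable_sums[OF sm] by simp
    have s2: "(\<lambda>n. A1 n * z^n) sums (deriv F z)"
      using summable_sums[OF S1[OF zn]] dF[OF z(1)] by (simp add: g1_def)
    have s3: "(\<lambda>n. of_real \<beta> * (A0 (Suc n) * z^n) + of_real (1 - \<beta>) * (A1 n * z^n)) sums
              (of_real \<beta> * (F z / z) + of_real (1 - \<beta>) * deriv F z)"
      by (intro sums_add sums_mult s1 s2)
    have trm: "of_real \<beta> * (A0 (Suc n) * z^n) + of_real (1 - \<beta>) * (A1 n * z^n)
              = z^n + (\<epsilon> * z)^n - (if n = 0 then 1 else 0)" for n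
    proof -
      have dn: "real (Suc n) - real n * \<beta> \<ge> 1" using denom_ge1[OF b, of "Suc n"] by simp
      then have dn': "complex_of_real (real (Suc n) - real n * \<beta>) \<noteq> 0"
        by (metis of_real_eq_0_iff not_one_le_zero)
      have "of_real \<beta> * (A0 (Suc n) * z^n) + of_real (1 - \<beta>) * (A1 n * z^n)
          = complex_of_real (real (Suc n) - real n * \<beta>) * A0 (Suc n) * z^n"
        by (simp add: A1_def diffs_def algebra_simps)
      also have "... = bcoef \<epsilon> n * z^n"
        using dn' by (simp add: A0_def acoef_def)
      also have "... = z^n + (\<epsilon> * z)^n - (if n = 0 then 1 else 0)"
        by (simp add: bcoef_def power_mult_distrib algebra_simps)
      finally show ?thesis .
    qed
    have ez: "cmod (\<epsilon> * z) < 1" using zn e by (simp add: norm_mult)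
    have s4: "(\<lambda>n. z^n + (\<epsilon> * z)^n - (if n = 0 then 1 else 0)) sums (1/(1-z) + 1/(1-\<epsilon>*z) - 1)"
      by (intro sums_diff sums_add geometric_sums zn ez sums_single[where f="\<lambda>_. 1", simplified])
    have "of_real \<beta> * (F z / z) + of_real (1 - \<beta>) * deriv F z = 1/(1-z) + 1/(1-\<epsilon>*z) - 1"
      using s3 s4 unfolding trm by (rule sums_unique2)
    then show ?thesis using re_geom[OF zn] re_geom[OF ez] by simp
  qed
  have "F \<in> A_class \<beta>" unfolding A_class_def using holF F0 dF0 re by blast
  moreover have "taylor_coeff F 2 = A0 2" unfolding tc2 using ddF[of 0] g20 by simp
  moreover have "taylor_coeff F 3 = A0 3" unfolding tc3 using dddF g30 by simp
  ultimately show ?thesis by (simp add: F_def A0_def)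
qed


theorem theorem3p1:
  fixes \<beta> \<mu> :: real
  assumes "0 \<le> \<beta>" and "\<beta> \<le> 1"
  shows "(\<forall>f\<in>A_class \<beta>.
            cmod (taylor_coeff f 3 - of_real \<mu> * (taylor_coeff f 2)^2) \<le> fekete_bound \<beta> \<mu>)
       \<and> (\<exists>f\<in>A_class \<beta>.
            cmod (taylor_coeff f 3 - of_real \<mu> * (taylor_coeff f 2)^2) = fekete_bound \<beta> \<mu>)"
proof
  show "\<forall>f\<in>A_class \<beta>. cmod (taylor_coeff f 3 - of_real \<mu> * (taylor_coeff f 2)^2) \<le> fekete_bound \<beta> \<mu>"
    using upper[OF assms] by blast
next
  define s where "s = 3 - 2*\<beta>"
  define t where "t = 2 - \<beta>"
  define \<nu> where "\<nu> = \<mu> * s / t^2"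
  have s: "s > 0" and t: "t > 0" using assms by (auto simp: s_def t_def)
  have fb: "fekete_bound \<beta> \<mu> =
     (if \<mu> < 0 then 2 - 4*\<nu> else if \<mu> \<le> t^2/s then 2 else 4*\<nu> - 2) / s"
    unfolding \<nu>_def s_def t_def by (rule fb_eq[OF assms])
  show "\<exists>f\<in>A_class \<beta>. cmod (taylor_coeff f 3 - of_real \<mu> * (taylor_coeff f 2)^2) = fekete_bound \<beta> \<mu>"
  proof (cases "0 \<le> \<mu> \<and> \<mu> \<le> t^2/s")
    case True
    have P: "fext \<beta> (-1) \<in> A_class \<beta> \<and> taylor_coeff (fext \<beta> (-1)) 2 = acoef \<beta> (-1) 2
         \<and> taylor_coeff (fext \<beta> (-1)) 3 = acoef \<beta> (-1) 3"
      by (rule fext_props[OF assms]) simp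
    have a2: "acoef \<beta> (-1) 2 = 0" by (simp add: acoef_def bcoef_def)
    have a3: "acoef \<beta> (-1) 3 = 2 / of_real s" by (simp add: acoef_def bcoef_def s_def)
    have "cmod (taylor_coeff (fext \<beta> (-1)) 3 - of_real \<mu> * (taylor_coeff (fext \<beta> (-1)) 2)^2) = 2 / s"
      using P s by (simp add: a2 a3 norm_divide)
    also have "... = fekete_bound \<beta> \<mu>" using fb True by simp
    finally show ?thesis using P by blast
  next
    case False
    have P: "fext \<beta> 1 \<in> A_class \<beta> \<and> taylor_coeff (fext \<beta> 1) 2 = acoef \<beta> 1 2
         \<and> taylor_coeff (fext \<beta> 1) 3 = acoef \<beta> 1 3"
      by (rule fext_props[OF assms]) simp
    have a2: "acoef \<beta> 1 2 = 2 / of_real t" by (simp add: acoef_def bcoef_def t_def)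
    have a3: "acoef \<beta> 1 3 = 2 / of_real s" by (simp add: acoef_def bcoef_def s_def)
    have "taylor_coeff (fext \<beta> 1) 3 - of_real \<mu> * (taylor_coeff (fext \<beta> 1) 2)^2
          = of_real ((2 - 4*\<nu>) / s)"
    proof -
      have T2: "taylor_coeff (fext \<beta> 1) 2 = 2 / of_real t" using P a2 by simp
      have T3: "taylor_coeff (fext \<beta> 1) 3 = 2 / of_real s" using P a3 by simp
      show ?thesis using s t unfolding T2 T3 by (simp add: \<nu>_def field_simps power2_eq_square)
    qed
    then have "cmod (taylor_coeff (fext \<beta> 1) 3 - of_real \<mu> * (taylor_coeff (fext \<beta> 1) 2)^2)
          = \<bar>2 - 4*\<nu>\<bar> / s"
      using s by (simp only: norm_of_real abs_divide abs_of_pos)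
    also have "... = fekete_bound \<beta> \<mu>"
    proof (cases "\<mu> < 0")
      case True
      then have "\<nu> < 0" using s t by (simp add: \<nu>_def divide_neg_pos mult_neg_pos)
      then show ?thesis using fb True by simp
    next
      case F: False
      then have "\<mu> > t^2/s" using False by auto
      then have "1 < \<nu>" using s t by (auto simp: \<nu>_def field_simps)
      then show ?thesis using fb F False by auto
    qed
    finally show ?thesis using P by blast
  qed
qed

end
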